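(* Let $v=(x,y,z)\in S$ be a point with at least one irrational coordinate. Then $G^k(v)\ne(0,0,0)$ for all $k\ge0$, so its itinerary is defined, and: the itinerary of $v$ consists only of symbols of type $\mathbb{A}$ if and only if $y=z=0$. Moreover, if the itinerary is $\mathbb{A}_{a_1},\mathbb{A}_{a_2},\dots$, then $x=[0;a_1,a_2,\dots]$ (regular continued fraction).
   Context: Let $S = \{(x,y,z)\in\mathbb{R}^3 : 0\le z\le y\le x\le 1\}$. For integers $n\ge1$ define $\mathbb{A}_n = \{\frac1{n+1} < x \le \frac1n,\ 0\le z\le y\le 1-nx\}$, $\mathbb{B}_n = \{0\le z\le 1-nx < y \le x\}$, $\mathbb{C}_n = \{1-nx < z \le y \le x \le \frac1n\}$; together with $\{(0,0,0)\}$ they partition $S$. The 3-dimensional Gauss map $G:S\to S$ is $G(0,0,0)=(0,0,0)$, $G(x,y,z)=\left(\frac1x-n,\frac yx,\frac zx\right)$ on $\mathbb{A}_n$, $G(x,y,z)=\left(\frac{1-y}{x}-n+1,\frac{x-y+z}{x},\frac{x-y}{x}\right)$ on $\mathbb{B}_n$, $G(x,y,z)=\left(\frac{1-z}{x}-n+1,\frac{x-z}{x},\frac{y-z}{x}\right)$ on $\mathbb{C}_n$. For a point $v$ whose forward orbit never hits the origin, its itinerary is the sequence $\mathbb{X}_{a_1},\mathbb{X}_{a_2},\dots$ ($\mathbb{X}\in\{\mathbb{A},\mathbb{B},\mathbb{C}\}$, $a_k\ge1$) with $G^{k-1}(v)\in\mathbb{X}_{a_k}$ for all $k\ge1$. 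*)

theory Defs
  imports Complex_Main
begin

type_synonym pt = "real \<times> real \<times> real"

definition S3 :: "pt set" where
  "S3 = {(x,y,z). 0 \<le> z \<and> z \<le> y \<and> y \<le> x \<and> x \<le> 1}"

definition regA :: "nat \<Rightarrow> pt set" where
  "regA n = {(x,y,z). 1 / (real n + 1) < x \<and> x \<le> 1 / real n \<and>
                      0 \<le> z \<and> z \<le> y \<and> y \<le> 1 - real n * x}"

definition regB :: "nat \<Rightarrow> pt set" where
  "regB n = {(x,y,z). 0 \<le> z \<and> z \<le> 1 - real n * x \<and> 1 - real n * x < y \<and> y \<le> x}"

definition regC :: "nat \<Rightarrow> pt set" where
  "regC n = {(x,y,z). 1 - real n * x < z \<and> z \<le> y \<and> y \<le> x \<and> x \<le> 1 / real n}"

datatype sym = SA | SB | SC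

definition region :: "sym \<Rightarrow> nat \<Rightarrow> pt set" where
  "region t n = (case t of SA \<Rightarrow> regA n | SB \<Rightarrow> regB n | SC \<Rightarrow> regC n)"

text \<open>On S the regions A_n, B_n, C_n (n >= 1) together
  with the origin partition S, so the index n below is unique. Outside S the value
  is irrelevant (we return the point itself).\<close>
definition G3 :: "pt \<Rightarrow> pt" where
  "G3 v = (let (x,y,z) = v in
     if v = (0,0,0) then (0,0,0)
     else if (\<exists>n\<ge>1. v \<in> regA n) then
       (let n = real (THE n. n \<ge> 1 \<and> v \<in> regA n) in (1/x - n, y/x, z/x))
     else if (\<exists>n\<ge>1. v \<in> regB n) then
       (let n = real (THE n. n \<ge> 1 \<and> v \<in> regB n) in
          ((1 - y)/x - n + 1, (x - y + z)/x, (x - y)/x))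
     else if (\<exists>n\<ge>1. v \<in> regC n) then
       (let n = real (THE n. n \<ge> 1 \<and> v \<in> regC n) in
          ((1 - z)/x - n + 1, (x - z)/x, (y - z)/x))
     else v)"

text \<open>(t, a) is an itinerary of v: for all k >= 1, a k >= 1 and G^(k-1)(v) lies in
  the region X_{a_k} with X = t k. Indices 0 of t and a are unused.\<close>
definition is_itinerary :: "pt \<Rightarrow> (nat \<Rightarrow> sym) \<Rightarrow> (nat \<Rightarrow> nat) \<Rightarrow> bool" where
  "is_itinerary v t a \<longleftrightarrow> (\<forall>k\<ge>1. a k \<ge> 1 \<and> (G3 ^^ (k - 1)) v \<in> region (t k) (a k))"

fun cf :: "(nat \<Rightarrow> nat) \<Rightarrow> nat \<Rightarrow> nat \<Rightarrow> real" where
  "cf a i 0 = 0"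
| "cf a i (Suc k) = 1 / (real (a i) + cf a (Suc i) k)"

definition cf_value :: "(nat \<Rightarrow> nat) \<Rightarrow> real \<Rightarrow> bool" where
  "cf_value a x \<longleftrightarrow> (\<lambda>k. cf a 1 k) \<longlonglongrightarrow> x"

end

theory Submission
  imports Defs
begin


lemma xbnd_B: "(x,y,z) \<in> regB n \<Longrightarrow> n \<ge> 1 \<Longrightarrow> 1/(real n+1) < x \<and> x \<le> 1/real n"
proof -
  assume h: "(x,y,z) \<in> regB n" "n \<ge> 1"
  hence a: "1 < (real n + 1) * x" "real n * x \<le> 1" by (auto simp: regB_def algebra_simps)
  have "1/(real n+1) < x" using a(1) by (simp add: divide_less_eq mult.commute)
  moreover have "x \<le> 1/real n" using a(2) h(2) by (simp add: le_divide_eq mult.commute)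
  ultimately show ?thesis by simp
qed

lemma xbnd_C: "(x,y,z) \<in> regC n \<Longrightarrow> n \<ge> 1 \<Longrightarrow> 1/(real n+1) < x \<and> x \<le> 1/real n"
proof -
  assume h: "(x,y,z) \<in> regC n" "n \<ge> 1"
  hence a: "1 < (real n + 1) * x" "x \<le> 1/real n" by (auto simp: regC_def algebra_simps)
  have "1/(real n+1) < x" using a(1) by (simp add: divide_less_eq mult.commute)
  thus ?thesis using a by simp
qed

lemma xbnd_A: "(x,y,z) \<in> regA n \<Longrightarrow> 1/(real n+1) < x \<and> x \<le> 1/real n"
  by (simp add: regA_def)

lemma nuniq: assumes "1/(real n+1) < x" "x \<le> 1/real n" "1/(real m+1) < x" "x \<le> 1/real m" "n\<ge>1" "m\<ge>1"
  shows "n = m"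
proof (rule ccontr)
  assume "n \<noteq> m"
  then consider "n < m" | "m < n" by linarith
  thus False
  proof cases
    case 1
    hence "real n + 1 \<le> real m" by simp
    hence "1/real m \<le> 1/(real n+1)" using assms by (intro divide_left_mono) auto
    thus False using assms by linarith
  next
    case 2
    hence "real m + 1 \<le> real n" by simp
    hence "1/real n \<le> 1/(real m+1)" using assms by (intro divide_left_mono) auto
    thus False using assms by linarith
  qed
qed

lemma xbnd: "(x,y,z) \<in> region t n \<Longrightarrow> n \<ge> 1 \<Longrightarrow> 1/(real n+1) < x \<and> x \<le> 1/real n"
  by (cases t) (auto simp: region_def dest: xbnd_A xbnd_B xbnd_C)

lemma notA_B: "(x,y,z) \<in> regB n \<Longrightarrow> n \<ge> 1 \<Longrightarrow> m \<ge> 1 \<Longrightarrow> (x,y,z) \<notin> regA m"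
proof
  assume h: "(x,y,z) \<in> regB n" "n \<ge> 1" "m \<ge> 1" "(x,y,z) \<in> regA m"
  have "n = m" using xbnd_B[OF h(1,2)] xbnd_A[OF h(4)] h nuniq by blast
  thus False using h by (auto simp: regA_def regB_def)
qed

lemma notA_C: "(x,y,z) \<in> regC n \<Longrightarrow> n \<ge> 1 \<Longrightarrow> m \<ge> 1 \<Longrightarrow> (x,y,z) \<notin> regA m"
proof
  assume h: "(x,y,z) \<in> regC n" "n \<ge> 1" "m \<ge> 1" "(x,y,z) \<in> regA m"
  have "n = m" using xbnd_C[OF h(1,2)] xbnd_A[OF h(4)] h nuniq by blast
  thus False using h by (auto simp: regA_def regC_def)
qed

lemma notB_C: "(x,y,z) \<in> regC n \<Longrightarrow> n \<ge> 1 \<Longrightarrow> m \<ge> 1 \<Longrightarrow> (x,y,z) \<notin> regB m"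
proof
  assume h: "(x,y,z) \<in> regC n" "n \<ge> 1" "m \<ge> 1" "(x,y,z) \<in> regB m"
  have "n = m" using xbnd_C[OF h(1,2)] xbnd_B[OF h(4,3)] h nuniq by blast
  thus False using h by (auto simp: regB_def regC_def)
qed

lemma GA: assumes "(x,y,z) \<in> regA n" "n \<ge> 1"
  shows "G3 (x,y,z) = (1/x - real n, y/x, z/x)"
proof -
  have xb: "1/(real n+1) < x" "x \<le> 1/real n" using xbnd_A[OF assms(1)] by auto
  have "x > 0" using xb(1) by (smt (verit) divide_pos_pos of_nat_0_le_iff)
  have th: "(THE m. m \<ge> 1 \<and> (x,y,z) \<in> regA m) = n"
    apply (rule the_equality)
    using assms apply simp
    using assms xb nuniq xbnd_A by blast
  show ?thesis unfolding G3_def using assms \<open>x>0\<close> th by auto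
qed

lemma GB: assumes "(x,y,z) \<in> regB n" "n \<ge> 1"
  shows "G3 (x,y,z) = ((1 - y)/x - real n + 1, (x - y + z)/x, (x - y)/x)"
proof -
  have xb: "1/(real n+1) < x" "x \<le> 1/real n" using xbnd_B[OF assms(1,2)] by auto
  have "x > 0" using xb(1) by (smt (verit) divide_pos_pos of_nat_0_le_iff)
  have th: "(THE m. m \<ge> 1 \<and> (x,y,z) \<in> regB m) = n"
    apply (rule the_equality)
    using assms apply simp
    using assms xb nuniq xbnd_B by blast
  have "\<not> (\<exists>m\<ge>1. (x,y,z) \<in> regA m)" using notA_B assms by blast
  then show ?thesis unfolding G3_def using assms \<open>x>0\<close> th by auto
qed

lemma GC: assumes "(x,y,z) \<in> regC n" "n \<ge> 1"
  shows "G3 (x,y,z) = ((1 - z)/x - real n + 1, (x - z)/x, (y - z)/x)"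
proof -
  have xb: "1/(real n+1) < x" "x \<le> 1/real n" using xbnd_C[OF assms(1,2)] by auto
  have "x > 0" using xb(1) by (smt (verit) divide_pos_pos of_nat_0_le_iff)
  have th: "(THE m. m \<ge> 1 \<and> (x,y,z) \<in> regC m) = n"
    apply (rule the_equality)
    using assms apply simp
    using assms xb nuniq xbnd_C by blast
  have "\<not> (\<exists>m\<ge>1. (x,y,z) \<in> regA m)" using notA_C assms by blast
  moreover have "\<not> (\<exists>m\<ge>1. (x,y,z) \<in> regB m)" using notB_C assms by blast
  ultimately show ?thesis unfolding G3_def using assms \<open>x>0\<close> th by auto
qed

lemma cover: assumes "(x,y,z) \<in> S3" "(x,y,z) \<noteq> (0,0,0)"
  shows "\<exists>t n. n \<ge> 1 \<and> (x,y,z) \<in> region t n"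
proof -
  have s: "0 \<le> z" "z \<le> y" "y \<le> x" "x \<le> 1" using assms(1) by (auto simp: S3_def)
  have "x > 0" using s assms(2) by force
  define f where "f = \<lfloor>1/x\<rfloor>"
  have "1/x \<ge> 1" using s \<open>x>0\<close> by (simp add: le_divide_eq)
  hence f1: "f \<ge> 1" unfolding f_def by linarith
  define n where "n = nat f"
  have rn: "real n = of_int f" using f1 n_def by simp
  have "real n \<le> 1/x" "1/x < real n + 1" unfolding rn f_def by linarith+
  hence nx: "real n * x \<le> 1" "1 < (real n + 1) * x" using \<open>x>0\<close>
    by (auto simp: le_divide_eq divide_less_eq mult.commute)
  have n1: "n \<ge> 1" using f1 n_def by simp
  have xb: "1/(real n+1) < x" "x \<le> 1/real n" using nx n1
    by (auto simp: le_divide_eq divide_less_eq mult.commute)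
  show ?thesis
  proof (cases "y \<le> 1 - real n * x")
    case True
    hence "(x,y,z) \<in> region SA n" using xb s by (simp add: region_def regA_def)
    thus ?thesis using n1 by blast
  next
    case F1: False
    show ?thesis
    proof (cases "z \<le> 1 - real n * x")
      case True
      hence "(x,y,z) \<in> region SB n" using F1 xb s by (simp add: region_def regB_def)
      thus ?thesis using n1 by blast
    next
      case False
      hence "(x,y,z) \<in> region SC n" using F1 xb s by (simp add: region_def regC_def)
      thus ?thesis using n1 by blast
    qed
  qed
qed

lemma mapsS: assumes "(x,y,z) \<in> region t n" "n \<ge> 1"
  shows "G3 (x,y,z) \<in> S3"
proof -
  have xb: "1/(real n+1) < x" "x \<le> 1/real n" using xbnd[OF assms] by auto
  have "x > 0" using xb(1) by (smt (verit) divide_pos_pos of_nat_0_le_iff)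
  have nx: "real n * x \<le> 1" "1 < (real n + 1) * x" using xb \<open>x>0\<close> assms(2)
    by (auto simp: le_divide_eq divide_less_eq mult.commute)
  show ?thesis
  proof (cases t)
    case SA
    hence r: "(x,y,z) \<in> regA n" using assms by (simp add: region_def)
    hence "0 \<le> z" "z \<le> y" "y \<le> 1 - real n * x" by (auto simp: regA_def)
    thus ?thesis using GA[OF r assms(2)] \<open>x>0\<close> nx
      by (auto simp: S3_def divide_simps algebra_simps)
  next
    case SB
    hence r: "(x,y,z) \<in> regB n" using assms by (simp add: region_def)
    hence "0 \<le> z" "z \<le> 1 - real n * x" "1 - real n * x < y" "y \<le> x" by (auto simp: regB_def)
    moreover have "x*(z + real n * x) \<le> x*1" using \<open>x>0\<close> \<open>z \<le> 1 - real n * x\<close> by (intro mult_left_mono) auto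
    ultimately show ?thesis using GB[OF r assms(2)] \<open>x>0\<close> nx
      by (auto simp: S3_def divide_simps algebra_simps)
  next
    case SC
    hence r: "(x,y,z) \<in> regC n" using assms by (simp add: region_def)
    hence "1 - real n * x < z" "z \<le> y" "y \<le> x" by (auto simp: regC_def)
    thus ?thesis using GC[OF r assms(2)] \<open>x>0\<close> nx
      by (auto simp: S3_def divide_simps algebra_simps)
  qed
qed

definition rat3 :: "pt \<Rightarrow> bool" where
  "rat3 v = (fst v \<in> \<rat> \<and> fst (snd v) \<in> \<rat> \<and> snd (snd v) \<in> \<rat>)"

lemma rat_back: assumes "(x,y,z) \<in> region t n" "n \<ge> 1" "rat3 (G3 (x,y,z))"
  shows "rat3 (x,y,z)"
proof -
  have xb: "1/(real n+1) < x" using xbnd[OF assms(1,2)] by auto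
  have "x > 0" using xb(1) by (smt (verit) divide_pos_pos of_nat_0_le_iff)
  show ?thesis
  proof (cases t)
    case SA
    hence r: "(x,y,z) \<in> regA n" using assms by (simp add: region_def)
    define a b c where "a = 1/x - real n" "b = y/x" "c = z/x"
    have q: "a \<in> \<rat>" "b \<in> \<rat>" "c \<in> \<rat>" using assms(3) GA[OF r assms(2)] by (auto simp: rat3_def a_b_c_def)
    have ex: "x = 1/(a + real n)" using \<open>x>0\<close> by (simp add: a_b_c_def)
    have xq: "x \<in> \<rat>" unfolding ex using q by simp
    have "y = b * x" "z = c * x" using \<open>x>0\<close> by (auto simp: a_b_c_def)
    thus ?thesis using xq q by (simp add: rat3_def)
  next
    case SB
    hence r: "(x,y,z) \<in> regB n" using assms by (simp add: region_def)
    define a b c where "a = (1 - y)/x - real n + 1" "b = (x - y + z)/x" "c = (x - y)/x"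
    have q: "a \<in> \<rat>" "b \<in> \<rat>" "c \<in> \<rat>" using assms(3) GB[OF r assms(2)] by (auto simp: rat3_def a_b_c_def)
    have ex: "x = 1/(a + real n - c)" using \<open>x>0\<close> by (simp add: a_b_c_def field_simps)
    have xq: "x \<in> \<rat>" unfolding ex using q by simp
    have ey: "y = x - c * x" using \<open>x>0\<close> by (auto simp: a_b_c_def field_simps)
    hence yq: "y \<in> \<rat>" using xq q by simp
    have "z = b * x - x + y" using \<open>x>0\<close> by (auto simp: a_b_c_def field_simps)
    thus ?thesis using xq yq q by (simp add: rat3_def)
  next
    case SC
    hence r: "(x,y,z) \<in> regC n" using assms by (simp add: region_def)
    define a b c where "a = (1 - z)/x - real n + 1" "b = (x - z)/x" "c = (y - z)/x"
    have q: "a \<in> \<rat>" "b \<in> \<rat>" "c \<in> \<rat>" using assms(3) GC[OF r assms(2)] by (auto simp: rat3_def a_b_c_def)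
    have ex: "x = 1/(a - b + real n)" using \<open>x>0\<close> by (simp add: a_b_c_def field_simps)
    have xq: "x \<in> \<rat>" unfolding ex using q by simp
    have ez: "z = x - b * x" using \<open>x>0\<close> by (auto simp: a_b_c_def field_simps)
    hence zq: "z \<in> \<rat>" using xq q by simp
    have "y = c * x + z" using \<open>x>0\<close> by (auto simp: a_b_c_def field_simps)
    thus ?thesis using xq zq q by (simp add: rat3_def)
  qed
qed

lemma zero_A: assumes "(x,0,0) \<in> region t n" "n \<ge> 1" shows "t = SA"
proof -
  have xb: "x \<le> 1/real n" using xbnd[OF assms] by auto
  have "real n * x \<le> 1" using xb assms(2) by (auto simp: le_divide_eq mult.commute)
  thus ?thesis using assms by (cases t) (auto simp: region_def regB_def regC_def)
qed


lemma cf_bnd: "(\<forall>j\<ge>i. a j \<ge> 1) \<Longrightarrow> 0 \<le> cf a i k \<and> cf a i k \<le> 1"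
proof (induction k arbitrary: i)
  case 0 thus ?case by simp
next
  case (Suc k)
  have "0 \<le> cf a (Suc i) k" using Suc.IH[of "Suc i"] Suc.prems by auto
  moreover have "real (a i) \<ge> 1" using Suc.prems by auto
  ultimately show ?case by (simp add: divide_simps)
qed

lemma cf_err: assumes X: "\<And>j. X j = 1/(real (a (Suc j)) + X (Suc j))"
  and B: "\<And>j. 0 \<le> X j \<and> X j \<le> 1" and A: "\<And>j. a (Suc j) \<ge> 1"
shows "\<bar>cf a (Suc i) k - X i\<bar> \<le> (\<Prod>j\<in>{i..<i+k}. X j)"
proof (induction k arbitrary: i)
  case 0 thus ?case using B[of i] by simp
next
  case (Suc k)
  define c where "c = cf a (Suc (Suc i)) k"
  define A' where "A' = real (a (Suc i))"
  define Y where "Y = X (Suc i)"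
  have c01: "0 \<le> c" "c \<le> 1" using cf_bnd[of "Suc (Suc i)" a k] A unfolding c_def
    by (metis Suc_le_D Suc_le_mono)+
  have A1: "A' \<ge> 1" using A unfolding A'_def by simp
  have Y01: "0 \<le> Y" "Y \<le> 1" using B unfolding Y_def by auto
  have ih: "\<bar>Y - c\<bar> \<le> (\<Prod>j\<in>{Suc i..<Suc i+k}. X j)" using Suc.IH[of "Suc i"] unfolding c_def Y_def by simp
  have Xi: "X i = 1/(A' + Y)" using X[of i] unfolding A'_def Y_def by simp
  have cfS: "cf a (Suc i) (Suc k) = 1/(A'+c)" by (simp add: c_def A'_def)
  have eq: "cf a (Suc i) (Suc k) - X i = (Y - c) * (1/(A'+c)) * X i"
    unfolding Xi cfS using A1 Y01 c01 by (simp add: field_simps)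
  have "\<bar>cf a (Suc i) (Suc k) - X i\<bar> = \<bar>Y - c\<bar> * (1/(A'+c)) * X i"
    unfolding eq using A1 c01 B[of i] by (simp add: abs_mult)
  also have "\<dots> \<le> \<bar>Y - c\<bar> * X i"
  proof -
    have "1/(A'+c) \<le> 1" using A1 c01 by simp
    hence "\<bar>Y - c\<bar> * (1/(A'+c)) \<le> \<bar>Y - c\<bar>" using mult_left_le[of "1/(A'+c)" "\<bar>Y - c\<bar>"] by simp
    thus ?thesis using B[of i] by (intro mult_right_mono) auto
  qed
  also have "\<dots> \<le> (\<Prod>j\<in>{Suc i..<Suc i+k}. X j) * X i"
    using ih B[of i] by (intro mult_right_mono) auto
  also have "\<dots> = (\<Prod>j\<in>{i..<i+Suc k}. X j)"
    by (simp add: prod.atLeast_Suc_lessThan mult.commute)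
  finally show ?case .
qed

lemma prod_lim: assumes X: "\<And>j. X j = 1/(real (a (Suc j)) + X (Suc j))"
  and B: "\<And>j. 0 \<le> X j \<and> X j \<le> 1" and A: "\<And>j. a (Suc j) \<ge> 1"
shows "(\<lambda>k. \<Prod>j<k. X j) \<longlonglongrightarrow> 0"
proof -
  define P where "P k = (\<Prod>j<k. X j)" for k
  define c where "c = sqrt (1/2)"
  have c2: "c^2 = 1/2" unfolding c_def by simp
  have c0: "0 < c" "c < 1" unfolding c_def by auto
  have pair: "X j * X (Suc j) \<le> 1/2" for j
  proof -
    have "X j * X (Suc j) = X (Suc j) / (real (a (Suc j)) + X (Suc j))"
      using X[of j] by simp
    also have "\<dots> \<le> 1/2" using A[of j] B[of "Suc j"] by (simp add: divide_simps)
    finally show ?thesis .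
  qed
  have P0: "0 \<le> P k" for k unfolding P_def using B by (simp add: prod_nonneg)
  have "P k \<le> 2 * c^k \<and> P (Suc k) \<le> 2 * c^(Suc k)" for k
  proof (induction k)
    case 0
    have "c * c \<le> c * 1" using c0 by (intro mult_left_mono) auto
    hence "1 \<le> 2 * c" using c2 by (simp add: power2_eq_square)
    then show ?case using B[of 0] by (simp add: P_def)
  next
    case (Suc k)
    have "P (Suc (Suc k)) = P k * (X k * X (Suc k))" by (simp add: P_def)
    also have "\<dots> \<le> P k * (1/2)" using pair[of k] P0[of k] by (intro mult_left_mono) auto
    also have "\<dots> \<le> 2 * c^k * (1/2)" using Suc.IH by simp
    also have "\<dots> = 2 * c^(Suc (Suc k))" using c2 by (simp add: power2_eq_square)
    finally show ?case using Suc.IH by simp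
  qed
  hence le: "P k \<le> 2 * c^k" for k by blast
  have "(\<lambda>k. 2 * c^k) \<longlonglongrightarrow> 2 * 0" using c0 by (intro tendsto_mult tendsto_const LIMSEQ_power_zero) auto
  hence "(\<lambda>k. 2 * c^k) \<longlonglongrightarrow> 0" by simp
  moreover have "eventually (\<lambda>k. (0::real) \<le> P k) sequentially" using P0 by simp
  moreover have "eventually (\<lambda>k. P k \<le> 2*c^k) sequentially" using le by simp
  ultimately have "P \<longlonglongrightarrow> 0" using tendsto_sandwich[of "\<lambda>_. 0" P sequentially "\<lambda>k. 2*c^k" 0] by simp
  thus ?thesis unfolding P_def[abs_def] .
qed



lemma G3_zero: "G3 (0,0,0) = (0,0,0)" by (simp add: G3_def)

lemma cover': "w \<in> S3 \<Longrightarrow> w \<noteq> (0,0,0) \<Longrightarrow> \<exists>t n. n \<ge> 1 \<and> w \<in> region t n"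
  using cover by (cases w) auto

lemma mapsS': "w \<in> region t n \<Longrightarrow> n \<ge> 1 \<Longrightarrow> G3 w \<in> S3"
  using mapsS by (cases w) auto

lemma rat_back': "w \<in> region t n \<Longrightarrow> n \<ge> 1 \<Longrightarrow> rat3 (G3 w) \<Longrightarrow> rat3 w"
  using rat_back by (cases w) auto

theorem mainTheorem14:
  fixes x y z :: real
  assumes "(x, y, z) \<in> S3"
    and "x \<notin> \<rat> \<or> y \<notin> \<rat> \<or> z \<notin> \<rat>"
  shows "(\<forall>k. (G3 ^^ k) (x, y, z) \<noteq> (0, 0, 0))
       \<and> (\<exists>t a. is_itinerary (x, y, z) t a)
       \<and> (\<forall>t a. is_itinerary (x, y, z) t a \<longrightarrow>
             (((\<forall>k\<ge>1. t k = SA) \<longleftrightarrow> (y = 0 \<and> z = 0))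
              \<and> ((\<forall>k\<ge>1. t k = SA) \<longrightarrow> cf_value a x)))"
proof -
  define v where "v = (x,y,z)"
  have inS: "(G3^^k) v \<in> S3" for k
  proof (induction k)
    case 0 thus ?case using assms(1) by (simp add: v_def)
  next
    case (Suc k)
    show ?case
    proof (cases "(G3^^k) v = (0,0,0)")
      case True thus ?thesis by (simp add: G3_zero S3_def)
    next
      case False
      then obtain t n where "n \<ge> 1" "(G3^^k) v \<in> region t n" using cover' Suc by blast
      thus ?thesis using mapsS' by simp
    qed
  qed
  have nrat: "\<not> rat3 ((G3^^k) v)" for k
  proof (induction k)
    case 0 thus ?case using assms(2) by (simp add: v_def rat3_def)
  next
    case (Suc k)
    have "(G3^^k) v \<noteq> (0,0,0)" using Suc by (auto simp: rat3_def)
    then obtain t n where "n \<ge> 1" "(G3^^k) v \<in> region t n" using cover' inS by blast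
    thus ?case using rat_back'[of "(G3^^k) v" t n] Suc by auto
  qed
  have nz: "(G3^^k) v \<noteq> (0,0,0)" for k using nrat[of k] by (auto simp: rat3_def)
  have ex: "\<forall>k. \<exists>p. snd p \<ge> 1 \<and> (G3^^k) v \<in> region (fst p) (snd p)"
    using cover' inS nz by fastforce
  then obtain f where f: "\<And>k. snd (f k) \<ge> 1 \<and> (G3^^k) v \<in> region (fst (f k)) (snd (f k))"
    by metis
  have itin: "is_itinerary v (\<lambda>k. fst (f (k-1))) (\<lambda>k. snd (f (k-1)))"
    unfolding is_itinerary_def using f by auto
  have part3: "((\<forall>k\<ge>1. t k = SA) \<longleftrightarrow> (y = 0 \<and> z = 0)) \<and> ((\<forall>k\<ge>1. t k = SA) \<longrightarrow> cf_value a x)"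
    if it: "is_itinerary v t a" for t a
  proof -
    have itk: "a (Suc k) \<ge> 1 \<and> (G3^^k) v \<in> region (t (Suc k)) (a (Suc k))" for k
      using it unfolding is_itinerary_def by (metis diff_Suc_1 le_add1 plus_1_eq_Suc)
    have dir1: "\<forall>k\<ge>1. t k = SA" if yz: "y = 0 \<and> z = 0"
    proof -
      have "fst (snd ((G3^^k) v)) = 0 \<and> snd (snd ((G3^^k) v)) = 0" for k
      proof (induction k)
        case 0 thus ?case using yz by (simp add: v_def)
      next
        case (Suc k)
        obtain p where w: "(G3^^k) v = (p,0,0)" using Suc by (metis prod.collapse)
        obtain t' n where tn: "n \<ge> 1" "(p,0,0) \<in> region t' n" using cover' inS nz w by metis
        have "t' = SA" using zero_A tn by blast
        hence "(p,0,0) \<in> regA n" using tn by (simp add: region_def)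
        hence "G3 (p,0,0) = (1/p - real n, 0/p, 0/p)" using GA tn by blast
        thus ?case using w by simp
      qed
      hence w: "(G3^^k) v = (fst ((G3^^k) v), 0, 0)" for k by (metis prod.collapse)
      show ?thesis
      proof (intro allI impI)
        fix k :: nat assume "k \<ge> 1"
        then obtain m where m: "k = Suc m" using not0_implies_Suc by fastforce
        show "t k = SA" using zero_A itk[of m] w[of m] m by metis
      qed
    qed
    have dir2: "y = 0 \<and> z = 0 \<and> cf_value a x" if allA: "\<forall>k\<ge>1. t k = SA"
    proof -
      define Xs where "Xs k = fst ((G3^^k) v)" for k
      define Ys where "Ys k = fst (snd ((G3^^k) v))" for k
      have Ak: "(G3^^k) v \<in> regA (a (Suc k))" for k using itk[of k] allA by (simp add: region_def)
      have step: "Xs k > 0 \<and> Xs k = 1/(real (a (Suc k)) + Xs (Suc k)) \<and> Ys (Suc k) = Ys k / Xs k" for k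
      proof -
        obtain p q r where w: "(G3^^k) v = (p,q,r)" by (metis prod.collapse)
        have r: "(p,q,r) \<in> regA (a (Suc k))" using Ak[of k] w by simp
        have "p > 0" using xbnd_A[OF r] by (smt (verit) divide_pos_pos of_nat_0_le_iff)
        have "G3 (p,q,r) = (1/p - real (a (Suc k)), q/p, r/p)" using GA r itk by blast
        hence "(G3^^(Suc k)) v = (1/p - real (a (Suc k)), q/p, r/p)" using w by simp
        thus ?thesis using \<open>p>0\<close> w unfolding Xs_def Ys_def by simp
      qed
      have X: "\<And>j. Xs j = 1/(real (a (Suc j)) + Xs (Suc j))" using step by blast
      have B: "0 \<le> Xs j \<and> Xs j \<le> 1" for j using inS[of j] unfolding Xs_def S3_def by (cases "(G3^^j) v") auto
      have A: "\<And>j. a (Suc j) \<ge> 1" using itk by blast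
      have Pl: "(\<lambda>k. \<Prod>j<k. Xs j) \<longlonglongrightarrow> 0" by (rule prod_lim[of Xs a, OF X B A])
      have yk: "y = Ys k * (\<Prod>j<k. Xs j)" for k
      proof (induction k)
        case 0 thus ?case by (simp add: Ys_def v_def)
      next
        case (Suc k)
        have "Ys (Suc k) * (\<Prod>j<Suc k. Xs j) = (Ys k / Xs k) * ((\<Prod>j<k. Xs j) * Xs k)"
          using step[of k] by simp
        also have "\<dots> = Ys k * (\<Prod>j<k. Xs j)"
        proof -
          have "Xs k \<noteq> 0" using step[of k] by linarith
          thus ?thesis by (simp add: field_simps)
        qed
        finally show ?case using Suc.IH by linarith
      qed
      have Y01: "0 \<le> Ys k \<and> Ys k \<le> 1" for k using inS[of k] unfolding Ys_def S3_def by (cases "(G3^^k) v") auto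
      have "y \<le> (\<Prod>j<k. Xs j)" for k
      proof -
        have "Ys k * (\<Prod>j<k. Xs j) \<le> 1 * (\<Prod>j<k. Xs j)"
          using Y01[of k] B by (intro mult_right_mono prod_nonneg) auto
        thus ?thesis using yk[of k] by simp
      qed
      hence "y \<le> 0" using LIMSEQ_le_const[OF Pl, of y] by blast
      moreover have "0 \<le> z" "z \<le> y" using assms(1) by (auto simp: S3_def)
      ultimately have yz: "y = 0" "z = 0" by auto
      have err: "\<bar>cf a 1 k - x\<bar> \<le> (\<Prod>j<k. Xs j)" for k
        using cf_err[of Xs a, OF X B A, of 0 k] by (simp add: Xs_def v_def atLeast0LessThan)
      have "(\<lambda>k. cf a 1 k - x) \<longlonglongrightarrow> 0"
      proof (rule tendsto_rabs_zero_cancel)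
        have e1: "eventually (\<lambda>k. (0::real) \<le> \<bar>cf a 1 k - x\<bar>) sequentially" by simp
        have e2: "eventually (\<lambda>k. \<bar>cf a 1 k - x\<bar> \<le> (\<Prod>j<k. Xs j)) sequentially" using err by simp
        show "(\<lambda>k. \<bar>cf a 1 k - x\<bar>) \<longlonglongrightarrow> 0"
          using tendsto_sandwich[OF e1 e2 tendsto_const Pl] .
      qed
      hence "(\<lambda>k. (cf a 1 k - x) + x) \<longlonglongrightarrow> 0 + x" by (intro tendsto_add tendsto_const)
      hence "cf_value a x" unfolding cf_value_def by simp
      thus ?thesis using yz by simp
    qed
    show ?thesis using dir1 dir2 by blast
  qed
  show ?thesis using nz itin part3 unfolding v_def by blast
qed

end
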